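(* For every positive integer $m$, the stopping distance of $H(m-1,m)$ is $2^m$.
   Context: All matrices are binary. The matrices $G(r,m)$, $0\le r\le m$, are defined recursively by $G(m,m) = I_{2^m}$, $G(0,m) = (11\cdots1)$ (length $2^m$), and for $0<r<m$, $G(r,m) = \begin{pmatrix} G(r,m-1) & G(r,m-1) \\ \mathbf{0} & G(r-1,m-1)\end{pmatrix}$. Define $H(0,m) = (11\cdots1)$ (length $2^m$), $H(m-1,m) = G(m-1,m)$, $H(m,m) = I_{2^m}$ for all $m\ge0$. For a matrix $H$, the stopping distance $s(H)$ is the largest integer such that for every set of $s(H)-1$ or fewer columns of $H$, the projection of $H$ onto those columns contains at least one row of Hamming weight exactly one. *)

theory Defs
  imports Main
begin

text \<open>Binary matrices are lists of rows; each row is a bool list (True = 1).\<close>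

definition idm :: "nat \<Rightarrow> bool list list" where
  "idm n = map (\<lambda>i. map (\<lambda>j. i = j) [0..<n]) [0..<n]"

function G :: "nat \<Rightarrow> nat \<Rightarrow> bool list list" where
  "G r m = (if r = m then idm (2^m)
            else if r = 0 then [replicate (2^m) True]
            else if r < m then
              map (\<lambda>row. row @ row) (G r (m-1)) @
              map (\<lambda>row. replicate (2^(m-1)) False @ row) (G (r-1) (m-1))
            else [])"
  by auto
termination by (relation "measure snd") auto

text \<open>H is only specified in the paper for r = 0, r = m-1 and r = m.\<close>
definition H :: "nat \<Rightarrow> nat \<Rightarrow> bool list list" where
  "H r m = (if r = m then idm (2^m)
            else if r = m - 1 then G (m-1) m
            else if r = 0 then [replicate (2^m) True]
            else undefined)"

definition ncols :: "bool list list \<Rightarrow> nat" where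
  "ncols M = length (hd M)"

definition stop_ok :: "bool list list \<Rightarrow> nat \<Rightarrow> bool" where
  "stop_ok M s = (\<forall>S. S \<subseteq> {..<ncols M} \<and> S \<noteq> {} \<and> card S < s \<longrightarrow>
      (\<exists>row \<in> set M. card {j \<in> S. row ! j} = 1))"

definition stopping_distance :: "bool list list \<Rightarrow> nat" where
  "stopping_distance M = (GREATEST s. stop_ok M s)"

end

theory Submission
  imports Defs
begin

declare G.simps[simp del]

lemma G_eq: "G m m = idm (2^m)" by (subst G.simps) simp
lemma G_zero: "0 < m \<Longrightarrow> G 0 m = [replicate (2^m) True]" by (subst G.simps) simp
lemma G_rec: "0 < r \<Longrightarrow> r < m \<Longrightarrow> G r m =
   map (\<lambda>row. row @ row) (G r (m-1)) @
   map (\<lambda>row. replicate (2^(m-1)) False @ row) (G (r-1) (m-1))"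
  by (subst G.simps) simp

lemma idm_rows: "row \<in> set (idm n) \<Longrightarrow> \<exists>i<n. row = map (\<lambda>j. i = j) [0..<n]"
  unfolding idm_def by auto

lemma G_len: "r \<le> m \<Longrightarrow> row \<in> set (G r m) \<Longrightarrow> length row = 2^m"
proof (induction m arbitrary: r row)
  case 0
  have "row \<in> set (idm 1)" using 0 G_eq[of 0] by simp
  then obtain i where "i < 1" "row = map (\<lambda>j. i = j) [0..<1]" using idm_rows by blast
  then show ?case by simp
next
  case (Suc m)
  show ?case
  proof (cases "r = Suc m")
    case True
    then have "row \<in> set (idm (2^Suc m))" using Suc.prems G_eq[of "Suc m"] by simp
    then obtain i where "row = map (\<lambda>j. i = j) [0..<2^Suc m]" using idm_rows by blast
    then show ?thesis by simp
  next
    case False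
    show ?thesis
    proof (cases "r = 0")
      case True
      then show ?thesis using Suc.prems G_zero[of "Suc m"] by auto
    next
      case False2: False
      have "r < Suc m" using False Suc.prems by simp
      then have e: "G r (Suc m) = map (\<lambda>row. row @ row) (G r m) @
        map (\<lambda>row. replicate (2^m) False @ row) (G (r-1) m)" using G_rec[of r "Suc m"] False2 by simp
      show ?thesis using Suc.prems Suc.IH[of r] Suc.IH[of "r-1"] \<open>r < Suc m\<close> unfolding e by auto
    qed
  qed
qed

lemma G_weight1: "r \<le> m \<Longrightarrow> row \<in> set (G r m) \<Longrightarrow> True \<in> set row"
proof (induction m arbitrary: r row)
  case 0
  have "row \<in> set (idm 1)" using 0 G_eq[of 0] by simp
  then obtain i where "i < 1" "row = map (\<lambda>j. i = j) [0..<1]" using idm_rows by blast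
  then show ?case by simp
next
  case (Suc m)
  show ?case
  proof (cases "r = Suc m")
    case True
    then obtain i where "i < 2^Suc m" "row = map (\<lambda>j. i = j) [0..<2^Suc m]"
      using Suc.prems idm_rows[of row] G_eq[of "Suc m"] by auto
    then show ?thesis by force
  next
    case False
    show ?thesis
    proof (cases "r = 0")
      case True
      then show ?thesis using Suc.prems G_zero[of "Suc m"] by auto
    next
      case False2: False
      have "r < Suc m" using False Suc.prems by simp
      then have e: "G r (Suc m) = map (\<lambda>row. row @ row) (G r m) @
        map (\<lambda>row. replicate (2^m) False @ row) (G (r-1) m)" using G_rec[of r "Suc m"] False2 by simp
      show ?thesis using Suc.prems Suc.IH[of r] Suc.IH[of "r-1"] \<open>r < Suc m\<close> unfolding e by auto
    qed
  qed
qed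

lemma w1: "True \<in> set xs \<Longrightarrow> 1 \<le> length (filter id xs)"
  by (metis One_nat_def Suc_leI filter_empty_conv id_apply length_greater_0_conv)

lemma G_weight2: "r < m \<Longrightarrow> row \<in> set (G r m) \<Longrightarrow> 2 \<le> length (filter id row)"
proof (induction m arbitrary: r row)
  case 0
  then show ?case by simp
next
  case (Suc m)
  show ?case
  proof (cases "r = 0")
    case True
    then show ?thesis using Suc.prems G_zero[of "Suc m"] by auto
  next
    case False2: False
    have "r < Suc m" using Suc.prems by simp
    then have e: "G r (Suc m) = map (\<lambda>row. row @ row) (G r m) @
      map (\<lambda>row. replicate (2^m) False @ row) (G (r-1) m)" using G_rec[of r "Suc m"] False2 by simp
    from Suc.prems(2) consider (a) g where "g \<in> set (G r m)" "row = g @ g"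
      | (b) g where "g \<in> set (G (r-1) m)" "row = replicate (2^m) False @ g"
      unfolding e by auto
    then show ?thesis
    proof cases
      case a
      have "1 \<le> length (filter id g)" using w1 G_weight1[of r m g] a \<open>r < Suc m\<close> by simp
      then show ?thesis using a by (simp add: id_def)
    next
      case b
      have "2 \<le> length (filter id g)" using Suc.IH[of "r-1" g] b \<open>r < Suc m\<close> False2 by (simp add: id_def)
      then show ?thesis using b by (simp add: id_def)
    qed
  qed
qed

lemma main: "S \<subseteq> {..<2^(Suc k)} \<Longrightarrow> S \<noteq> {} \<Longrightarrow> S \<noteq> {..<2^Suc k} \<Longrightarrow>
   \<exists>row\<in>set (G k (Suc k)). card {j\<in>S. row ! j} = 1"
proof (induction k arbitrary: S)
  case 0
  have e: "G 0 (Suc 0) = [[True, True]]" using G_zero[of 1] by (simp add: numeral_2_eq_2)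
  have s01: "\<forall>j\<in>S. j = 0 \<or> j = 1" using "0.prems"(1) by auto
  have s: "{j\<in>S. [True, True] ! j} = S"
    using s01 by auto
  obtain x where x: "x \<in> S" using "0.prems" by auto
  have "S = {x}"
  proof (rule ccontr)
    assume "S \<noteq> {x}"
    then obtain y where y: "y \<in> S" "y \<noteq> x" using x by auto
    have xy: "x = 0 \<or> x = 1" "y = 0 \<or> y = 1" using s01 x y by auto
    have "0 \<in> S \<and> (1::nat) \<in> S" using xy x y by (elim disjE) auto
    moreover have "{..<2::nat} = {0, 1}" by auto
    ultimately have "{..<2::nat} \<subseteq> S" by simp
    then have "S = {..<2^Suc 0}" using "0.prems"(1) by auto
    then show False using "0.prems"(3) by blast
  qed
  then show ?case unfolding e using s by simp
next
  case (Suc k)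
  define n :: nat where "n = 2^Suc k"
  have n2: "2^Suc (Suc k) = 2 * n" unfolding n_def by simp
  have e: "G (Suc k) (Suc (Suc k)) = map (\<lambda>row. row @ row) (idm n) @
      map (\<lambda>row. replicate n False @ row) (G k (Suc k))"
    using G_rec[of "Suc k" "Suc (Suc k)"] G_eq[of "Suc k"] unfolding n_def by simp
  have Ssub: "\<And>j. j \<in> S \<Longrightarrow> j < 2 * n" using Suc.prems(1) n2 by auto
  show ?case
  proof (cases "\<exists>i<n. (i \<in> S) \<noteq> (i + n \<in> S)")
    case True
    then obtain i where i: "i < n" "(i \<in> S) \<noteq> (i + n \<in> S)" by auto
    define xs where "xs = map (\<lambda>j. i = j) [0..<n]"
    have row: "xs @ xs \<in> set (G (Suc k) (Suc (Suc k)))" unfolding e idm_def xs_def using i by auto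
    have nth: "\<And>j. j < 2 * n \<Longrightarrow> (xs @ xs) ! j = (j = i \<or> j = i + n)"
      unfolding xs_def using i by (auto simp: nth_append)
    have "{j\<in>S. (xs @ xs) ! j} = (if i \<in> S then {i} else {i + n})"
      using i nth Ssub by auto
    then have "card {j\<in>S. (xs @ xs) ! j} = 1" by simp
    then show ?thesis using row by blast
  next
    case False
    then have eqv: "\<And>i. i < n \<Longrightarrow> (i \<in> S) = (i + n \<in> S)" by auto
    define R where "R = {j. j < n \<and> j + n \<in> S}"
    have R1: "R \<subseteq> {..<2^Suc k}" unfolding R_def n_def by auto
    have R2: "R \<noteq> {}"
    proof -
      obtain j where j: "j \<in> S" using Suc.prems by auto
      show ?thesis
      proof (cases "j < n")
        case True
        then show ?thesis using eqv j unfolding R_def by auto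
      next
        case False
        moreover have "j < 2 * n" using j Ssub by blast
        ultimately have "j - n \<in> R" using j unfolding R_def by auto
        then show ?thesis by auto
      qed
    qed
    have R3: "R \<noteq> {..<2^Suc k}"
    proof
      assume a: "R = {..<2^Suc k}"
      have "{..<2^Suc (Suc k)} \<subseteq> S"
      proof
        fix j :: nat assume "j \<in> {..<2^Suc (Suc k)}"
        then have j: "j < 2 * n" using n2 by simp
        show "j \<in> S"
        proof (cases "j < n")
          case True
          then have "j \<in> R" using a n_def by auto
          then show ?thesis using eqv True unfolding R_def by auto
        next
          case False
          then have "j - n \<in> R" using a n_def j by auto
          then show ?thesis using False unfolding R_def by auto
        qed
      qed
      then show False using Suc.prems by auto
    qed
    obtain g where g: "g \<in> set (G k (Suc k))" "card {j\<in>R. g ! j} = 1"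
      using Suc.IH[OF R1 R2 R3] by blast
    have row: "replicate n False @ g \<in> set (G (Suc k) (Suc (Suc k)))" unfolding e using g by auto
    have "{j\<in>S. (replicate n False @ g) ! j} = (\<lambda>j. j + n) ` {j\<in>R. g ! j}"
    proof
      show "{j \<in> S. (replicate n False @ g) ! j} \<subseteq> (\<lambda>j. j + n) ` {j \<in> R. g ! j}"
      proof
        fix j assume j: "j \<in> {j \<in> S. (replicate n False @ g) ! j}"
        then have "\<not> j < n" by (auto simp: nth_append)
        moreover have "j < 2 * n" using j Ssub by blast
        ultimately have "j - n \<in> {j \<in> R. g ! j}" using j unfolding R_def by (auto simp: nth_append)
        moreover have "j = (j - n) + n" using \<open>\<not> j < n\<close> by simp
        ultimately show "j \<in> (\<lambda>j. j + n) ` {j \<in> R. g ! j}" by blast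
      qed
    next
      show "(\<lambda>j. j + n) ` {j \<in> R. g ! j} \<subseteq> {j \<in> S. (replicate n False @ g) ! j}"
        unfolding R_def by (auto simp: nth_append)
    qed
    moreover have "card ((\<lambda>j. j + n) ` {j\<in>R. g ! j}) = 1"
      using g(2) by (subst card_image) (auto simp: inj_on_def)
    ultimately have c1: "card {j\<in>S. (replicate n False @ g) ! j} = 1" by simp
    show ?thesis using c1 row by blast
  qed
qed

theorem lemma11:
  fixes m :: nat
  assumes "m \<ge> 1"
  shows "stopping_distance (H (m-1) m) = 2^m"
proof -
  obtain k where k: "m = Suc k" using assms by (cases m) auto
  have H: "H (m-1) m = G k (Suc k)" unfolding H_def k by simp
  define M where "M = G k (Suc k)"
  have ne: "M \<noteq> []"
    unfolding M_def by (cases k) (simp_all add: G_zero G_rec G_eq idm_def)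
  have nc: "ncols M = 2^m"
    using G_len[of k "Suc k" "hd M"] ne k unfolding ncols_def M_def by auto
  have ok: "stop_ok M (2^m)"
    unfolding stop_ok_def nc
  proof (intro allI impI)
    fix S :: "nat set" assume a: "S \<subseteq> {..<2 ^ m} \<and> S \<noteq> {} \<and> card S < 2 ^ m"
    then have "S \<noteq> {..<2^m}" by auto
    then show "\<exists>row\<in>set M. card {j \<in> S. row ! j} = 1"
      using main[of S k] a k unfolding M_def by auto
  qed
  have bnd: "s \<le> 2^m" if "stop_ok M s" for s
  proof (rule ccontr)
    assume "\<not> s \<le> 2^m"
    moreover have "{..<(2::nat)^m} \<noteq> {}" using lessThan_empty_iff by simp
    ultimately have "\<exists>row\<in>set M. card {j \<in> {..<2^m}. row ! j} = 1"
      using that unfolding stop_ok_def nc by auto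
    then obtain row where r: "row \<in> set M" "card {j \<in> {..<2^m}. row ! j} = 1" by auto
    have len: "length row = 2^m" using G_len[of k "Suc k" row] r k unfolding M_def by simp
    have "2 \<le> length (filter id row)" using G_weight2[of k "Suc k" row] r unfolding M_def by simp
    also have "length (filter id row) = card {j \<in> {..<2^m}. row ! j}"
      unfolding length_filter_conv_card len by (rule arg_cong[where f=card]) auto
    finally show False using r by simp
  qed
  show ?thesis unfolding stopping_distance_def H M_def[symmetric]
    by (rule Greatest_equality) (use ok bnd in auto)
qed

end
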